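(* Let $X$ be the Markov process on the star graph $\Gamma$ generated by the operator $(L,D(L))$ described in the context, for some finite stickiness parameter $\eta\ge 0$. Then the vertex $\mathsf v$ is not a trap for $X$, i.e. it is not true that $\mathbf P_{\mathsf v}(\xi_{\mathsf v}>t)=1$ for every $t>0$, where $\xi_{\mathsf v}:=\inf\{s>0: X(s)\neq \mathsf v\}$.
   Context: Star graph: fix $N\ge1$. $\Gamma$ is the quotient of the disjoint union of $N$ copies of $[0,\infty)$ obtained by identifying all the origins; points are written $(i,x)$ with $i\in\{1,\dots,N\}$, $x\ge 0$, and $\mathsf v=(\cdot,0)$ is the unique vertex. $\Gamma$ carries the metric $d((j,x),(i,y))=|x-y|$ if $i=j$ and $x+y$ if $i\ne j$. A function $f:\Gamma\to\mathbb R$ is identified with $(f_1,\dots,f_N)$, $f_i(x)=f(i,x)$, with $f_i(0)=f_j(0)$ for all $i,j$; derivatives are taken edgewise (one-sided at $0$, not required to agree across edges). $C_0(\Gamma)$: continuous functions on $\Gamma$ vanishing at infinity on each edge. $C^2(\Gamma)$: continuous $f$ on $\Gamma$ with each $f_i\in C^2([0,\infty))$. $PC(\Gamma)$: functions whose restrictions $f_i$ are bounded and continuous on $(0,\infty)$ and extend continuously to $[0,\infty)$. Coefficients: $\sigma,b\in PC(\Gamma)$ with $\sigma>\sigma_0$ on $\Gamma$ for some constant $\sigma_0>0$. Operator: $Lf(i,x)=\frac12\sigma_i^2(x)f_i''(x)+b_i(x)f_i'(x)$ for $x>0$; when the limits $\lim_{x\to0}L_if(x)$ coincide for all $i$, $Lf(\mathsf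 v)$ denotes this common value. Fix $\eta\ge0$ and $\rho_1,\dots,\rho_N>0$ with $\sum_i\rho_i=1$, and set $D(L)=\{f\in C^2(\Gamma)\cap C_0(\Gamma): Lf\in C_0(\Gamma),\ \eta Lf(\mathsf v)=\sum_{i=1}^N\rho_if_i'(0)\}$. It is known that $(L,D(L))$ generates a strongly continuous semigroup on $C_0(\Gamma)$ associated with a conservative Markov process $X(t)=(i(t),x(t))$ on $\Gamma$ with continuous paths; $\mathbf P_{\mathsf x},\mathbf E_{\mathsf x}$ denote probability and expectation for the process started at $\mathsf x$. *)

theory Defs
  imports "HOL-Probability.Probability"
begin

text \<open>A point (i,x) of the star graph with N edges is represented canonically as a pair
  of type nat * real: points with x > 0 are (i,x) with 1 <= i <= N, and all origins (i,0) are
  identified with the single vertex, represented by (0,0).\<close>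

definition vtx :: "nat \<times> real" where
  "vtx = (0, 0)"

definition star :: "nat \<Rightarrow> (nat \<times> real) set" where
  "star N = {(i, x). 1 \<le> i \<and> i \<le> N \<and> 0 < x} \<union> {vtx}"

definition spt :: "nat \<Rightarrow> real \<Rightarrow> nat \<times> real" where
  "spt i x = (if x = 0 then vtx else (i, x))"

text \<open>The metric: |x-y| on the same edge, x+y on different edges
  (the vertex (0,0) is handled uniformly by the same formula).\<close>
definition stardist :: "nat \<times> real \<Rightarrow> nat \<times> real \<Rightarrow> real" where
  "stardist p q = (if fst p = fst q then \<bar>snd p - snd q\<bar> else snd p + snd q)"

definition edge :: "(nat \<times> real \<Rightarrow> real) \<Rightarrow> nat \<Rightarrow> real \<Rightarrow> real" where
  "edge f i x = f (spt i x)"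

definition star_continuous :: "nat \<Rightarrow> (nat \<times> real \<Rightarrow> real) \<Rightarrow> bool" where
  "star_continuous N f \<longleftrightarrow>
     (\<forall>p\<in>star N. \<forall>e>0. \<exists>d>0. \<forall>q\<in>star N. stardist q p < d \<longrightarrow> \<bar>f q - f p\<bar> < e)"

definition C0 :: "nat \<Rightarrow> (nat \<times> real \<Rightarrow> real) set" where
  "C0 N = {f. star_continuous N f \<and> (\<forall>i\<in>{1..N}. (edge f i \<longlongrightarrow> 0) at_top)}"

definition d1 :: "(nat \<times> real \<Rightarrow> real) \<Rightarrow> nat \<Rightarrow> real \<Rightarrow> real" where
  "d1 f i x = (THE D. (edge f i has_real_derivative D) (at x within {0..}))"

definition d2 :: "(nat \<times> real \<Rightarrow> real) \<Rightarrow> nat \<Rightarrow> real \<Rightarrow> real" where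
  "d2 f i x = (THE D. (d1 f i has_real_derivative D) (at x within {0..}))"

definition C2 :: "nat \<Rightarrow> (nat \<times> real \<Rightarrow> real) set" where
  "C2 N = {f. star_continuous N f \<and>
     (\<forall>i\<in>{1..N}.
        (\<forall>x\<ge>0. \<exists>D. (edge f i has_real_derivative D) (at x within {0..})) \<and>
        (\<forall>x\<ge>0. \<exists>D. (d1 f i has_real_derivative D) (at x within {0..})) \<and>
        continuous_on {0..} (d2 f i))}"

definition PC :: "nat \<Rightarrow> (nat \<times> real \<Rightarrow> real) set" where
  "PC N = {f. \<forall>i\<in>{1..N}. bounded (edge f i ` {0<..}) \<and> continuous_on {0<..} (edge f i)
              \<and> (\<exists>l. (edge f i \<longlongrightarrow> l) (at_right 0))}"

definition Ledge :: "(nat \<times> real \<Rightarrow> real) \<Rightarrow> (nat \<times> real \<Rightarrow> real) \<Rightarrow> (nat \<times> real \<Rightarrow> real)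
    \<Rightarrow> nat \<Rightarrow> real \<Rightarrow> real" where
  "Ledge \<sigma> b f i x = (1/2) * (edge \<sigma> i x)\<^sup>2 * d2 f i x + edge b i x * d1 f i x"

definition Lop :: "nat \<Rightarrow> (nat \<times> real \<Rightarrow> real) \<Rightarrow> (nat \<times> real \<Rightarrow> real) \<Rightarrow> (nat \<times> real \<Rightarrow> real)
    \<Rightarrow> nat \<times> real \<Rightarrow> real" where
  "Lop N \<sigma> b f p =
     (if p = vtx then (THE l. \<forall>i\<in>{1..N}. (Ledge \<sigma> b f i \<longlongrightarrow> l) (at_right 0))
      else Ledge \<sigma> b f (fst p) (snd p))"

definition DL :: "nat \<Rightarrow> (nat \<times> real \<Rightarrow> real) \<Rightarrow> (nat \<times> real \<Rightarrow> real) \<Rightarrow> real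
    \<Rightarrow> (nat \<Rightarrow> real) \<Rightarrow> (nat \<times> real \<Rightarrow> real) set" where
  "DL N \<sigma> b \<eta> \<rho> = {f. f \<in> C2 N \<and> f \<in> C0 N \<and> (\<lambda>p. Lop N \<sigma> b f p) \<in> C0 N \<and>
      (\<forall>i\<in>{1..N}. (\<exists>l. (Ledge \<sigma> b f i \<longlongrightarrow> l) (at_right 0))) \<and>
      (\<forall>i\<in>{1..N}. \<forall>j\<in>{1..N}. Lim (at_right 0) (Ledge \<sigma> b f i) = Lim (at_right 0) (Ledge \<sigma> b f j)) \<and>
      \<eta> * Lop N \<sigma> b f vtx = (\<Sum>i=1..N. \<rho> i * d1 f i 0)}"

definition supnorm :: "nat \<Rightarrow> (nat \<times> real \<Rightarrow> real) \<Rightarrow> real" where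
  "supnorm N f = (SUP p\<in>star N. \<bar>f p\<bar>)"

definition strongly_cont_semigroup :: "nat \<Rightarrow> (real \<Rightarrow> (nat \<times> real \<Rightarrow> real) \<Rightarrow> (nat \<times> real \<Rightarrow> real)) \<Rightarrow> bool" where
  "strongly_cont_semigroup N T \<longleftrightarrow>
     (\<forall>t\<ge>0. \<forall>f\<in>C0 N. T t f \<in> C0 N) \<and>
     (\<forall>t\<ge>0. \<forall>f\<in>C0 N. \<forall>g\<in>C0 N. \<forall>a::real. \<forall>p\<in>star N.
        T t (\<lambda>q. a * f q + g q) p = a * T t f p + T t g p) \<and>
     (\<forall>t\<ge>0. \<exists>C. \<forall>f\<in>C0 N. supnorm N (T t f) \<le> C * supnorm N f) \<and>
     (\<forall>f\<in>C0 N. \<forall>p\<in>star N. T 0 f p = f p) \<and>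
     (\<forall>s\<ge>0. \<forall>t\<ge>0. \<forall>f\<in>C0 N. \<forall>p\<in>star N. T (s + t) f p = T s (T t f) p) \<and>
     (\<forall>f\<in>C0 N. ((\<lambda>t. supnorm N (\<lambda>p. T t f p - f p)) \<longlongrightarrow> 0) (at_right 0))"

definition generates :: "nat \<Rightarrow> ((nat \<times> real \<Rightarrow> real) \<Rightarrow> (nat \<times> real \<Rightarrow> real))
    \<Rightarrow> (nat \<times> real \<Rightarrow> real) set \<Rightarrow> (real \<Rightarrow> (nat \<times> real \<Rightarrow> real) \<Rightarrow> (nat \<times> real \<Rightarrow> real)) \<Rightarrow> bool" where
  "generates N A D T \<longleftrightarrow> strongly_cont_semigroup N T \<and> D \<subseteq> C0 N \<and>
     (\<forall>f\<in>C0 N. f \<in> D \<longleftrightarrow>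
        (\<exists>g\<in>C0 N. ((\<lambda>t. supnorm N (\<lambda>p. (T t f p - f p) / t - g p)) \<longlongrightarrow> 0) (at_right 0))) \<and>
     (\<forall>f\<in>D. ((\<lambda>t. supnorm N (\<lambda>p. (T t f p - f p) / t - A f p)) \<longlongrightarrow> 0) (at_right 0))"

definition natfilt :: "'w measure \<Rightarrow> (real \<Rightarrow> 'w \<Rightarrow> nat \<times> real) \<Rightarrow> real \<Rightarrow> 'w measure" where
  "natfilt M X s = sigma (space M)
     {X r -` A \<inter> space M | r A. 0 \<le> r \<and> r \<le> s \<and> A \<in> sets borel}"

definition markov_process_of :: "nat \<Rightarrow> (real \<Rightarrow> (nat \<times> real \<Rightarrow> real) \<Rightarrow> (nat \<times> real \<Rightarrow> real))
    \<Rightarrow> (nat \<times> real \<Rightarrow> 'w measure) \<Rightarrow> (real \<Rightarrow> 'w \<Rightarrow> nat \<times> real) \<Rightarrow> bool" where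
  "markov_process_of N T P X \<longleftrightarrow>
     (\<forall>x\<in>star N.
        prob_space (P x) \<and>
        (\<forall>t\<ge>0. X t \<in> measurable (P x) borel) \<and>
        (\<forall>\<omega>\<in>space (P x). \<forall>t\<ge>0. X t \<omega> \<in> star N) \<and>
        (\<forall>\<omega>\<in>space (P x). \<forall>t\<ge>0. \<forall>e>0. \<exists>d>0. \<forall>s\<ge>0.
            \<bar>s - t\<bar> < d \<longrightarrow> stardist (X s \<omega>) (X t \<omega>) < e) \<and>
        (AE \<omega> in P x. X 0 \<omega> = x) \<and>
        (\<forall>t\<ge>0. \<forall>f\<in>C0 N. T t f x = (\<integral>\<omega>. f (X t \<omega>) \<partial>P x)) \<and>
        (\<forall>s\<ge>0. \<forall>t\<ge>0. \<forall>f\<in>C0 N. AE \<omega> in P x.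
            real_cond_exp (P x) (natfilt (P x) X s) (\<lambda>\<omega>. f (X (s + t) \<omega>)) \<omega> = T t f (X s \<omega>)))"

text \<open>First exit time from the vertex: inf {s > 0. X(s) /= v}, in the extended reals
  (so that it is +infinity if the path never leaves v).\<close>
definition exit_vtx :: "(real \<Rightarrow> 'w \<Rightarrow> nat \<times> real) \<Rightarrow> 'w \<Rightarrow> ereal" where
  "exit_vtx X \<omega> = Inf (ereal ` {s. 0 < s \<and> X s \<omega> \<noteq> vtx})"

end

theory Submission imports Defs "HOL-Real_Asymp.Real_Asymp" begin
definition EE :: "real \<Rightarrow> real \<Rightarrow> real \<Rightarrow> real \<Rightarrow> real" where
  "EE c0 c1 c2 x = exp (-x) * (c0 + c1 * x + c2 * x^2)"

lemma EE_deriv: "(EE c0 c1 c2 has_real_derivative EE (c1 - c0) (2*c2 - c1) (-c2) x) (at x within S)"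
  unfolding EE_def
  by (rule derivative_eq_intros refl | simp)+ (simp add: algebra_simps power2_eq_square)

lemma EE_cont: "continuous_on S (EE c0 c1 c2)"
  unfolding EE_def by (intro continuous_intros)

lemma EE_lim: "(EE c0 c1 c2 \<longlongrightarrow> 0) at_top"
  unfolding EE_def by real_asymp

lemma EE_0: "EE c0 c1 c2 0 = c0" by (simp add: EE_def)

lemma nbot: assumes "(x::real) \<ge> 0" shows "at x within {0..} \<noteq> bot"
proof (cases "x = 0")
  case True then show ?thesis by (simp add: at_within_Ici_at_right)
next
  case False
  then have "at x within {0..} = at x" using \<open>x\<ge>0\<close>
    by (intro at_within_interior) auto
  then show ?thesis by simp
qed

lemma the_deriv:
  assumes "(x::real) \<ge> 0" "(g has_real_derivative D) (at x within {0..})"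
  shows "(THE D. (g has_real_derivative D) (at x within {0..})) = D"
  using assms has_field_derivative_unique[OF _ _ nbot[OF assms(1)]] by blast

lemma stardist_spt: "1 \<le> i \<Longrightarrow> (x::real) \<ge> 0 \<Longrightarrow> y \<ge> 0 \<Longrightarrow> stardist (spt i y) (spt i x) = \<bar>y - x\<bar>"
  by (auto simp: stardist_def spt_def vtx_def)

lemma spt_in_star: "1 \<le> i \<Longrightarrow> i \<le> N \<Longrightarrow> (x::real) \<ge> 0 \<Longrightarrow> spt i x \<in> star N"
  by (auto simp: star_def spt_def)

lemma star_cases: "p \<in> star N \<Longrightarrow> p = vtx \<or> (\<exists>i x. 1 \<le> i \<and> i \<le> N \<and> x > 0 \<and> p = spt i x \<and> p = (i, x))"
proof (cases p)
  case (Pair i x)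
  assume "p \<in> star N"
  then show ?thesis unfolding Pair star_def spt_def vtx_def by auto
qed

lemma vtx_in_star: "vtx \<in> star N" by (simp add: star_def)

lemma edge_cont:
  assumes "star_continuous N g" "1 \<le> i" "i \<le> N"
  shows "continuous_on {0..} (edge g i)"
  unfolding continuous_on_iff
proof (intro ballI allI impI)
  fix x e :: real assume x: "x \<in> {0..}" and e: "0 < e"
  have "spt i x \<in> star N" using spt_in_star assms x by auto
  then obtain d where d: "d > 0" "\<forall>q\<in>star N. stardist q (spt i x) < d \<longrightarrow> \<bar>g q - g (spt i x)\<bar> < e"
    using assms(1) e unfolding star_continuous_def by blast
  show "\<exists>d>0. \<forall>x'\<in>{0..}. dist x' x < d \<longrightarrow> dist (edge g i x') (edge g i x) < e"
  proof (intro exI[of _ d] conjI ballI impI)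
    fix y assume y: "y \<in> {(0::real)..}" "dist y x < d"
    have "spt i y \<in> star N" using spt_in_star assms y by auto
    moreover have "stardist (spt i y) (spt i x) < d" using stardist_spt[of i x y] assms x y by (simp add: dist_real_def)
    ultimately show "dist (edge g i y) (edge g i x) < e" using d by (simp add: edge_def dist_real_def)
  qed (use d in auto)
qed

lemma edge_cont_imp:
  assumes N: "1 \<le> N" and cont: "\<forall>i\<in>{1..N}. continuous_on {0..} (edge g i)"
  shows "star_continuous N g"
  unfolding star_continuous_def
proof (intro ballI allI impI)
  fix p e assume p: "p \<in> star N" and e: "(0::real) < e"
  have ci: "\<exists>d>0. \<forall>y\<in>{0..}. dist y x < d \<longrightarrow> dist (edge g j y) (edge g j x) < e"
    if "j \<in> {1..N}" "x \<ge> 0" for j x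
  proof -
    have "\<forall>x\<in>{0..}. \<forall>e>0. \<exists>d>0. \<forall>y\<in>{0..}. dist y x < d \<longrightarrow> dist (edge g j y) (edge g j x) < e"
      using cont that(1) unfolding continuous_on_iff by blast
    then show ?thesis using that(2) e by simp
  qed
  show "\<exists>d>0. \<forall>q\<in>star N. stardist q p < d \<longrightarrow> \<bar>g q - g p\<bar> < e"
  proof (cases "p = vtx")
    case True
    have "\<forall>j\<in>{1..N}. \<exists>d>0. \<forall>y\<ge>0. y < d \<longrightarrow> \<bar>g (spt j y) - g vtx\<bar> < e"
    proof
      fix j assume j: "j \<in> {1..N}"
      obtain d where d: "d>0" "\<forall>y\<in>{0..}. dist y 0 < d \<longrightarrow> dist (edge g j y) (edge g j 0) < e"
        using ci[OF j order_refl] by blast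
      have "\<forall>y\<ge>0. y < d \<longrightarrow> \<bar>g (spt j y) - g vtx\<bar> < e"
      proof (intro allI impI)
        fix y :: real assume "0 \<le> y" "y < d"
        then have "dist (edge g j y) (edge g j 0) < e" using d(2) by (simp add: dist_real_def)
        moreover have "edge g j 0 = g vtx" by (simp add: edge_def spt_def)
        ultimately show "\<bar>g (spt j y) - g vtx\<bar> < e" by (simp add: edge_def dist_real_def)
      qed
      then show "\<exists>d>0. \<forall>y\<ge>0. y < d \<longrightarrow> \<bar>g (spt j y) - g vtx\<bar> < e" using d(1) by blast
    qed
    from bchoice[OF this] obtain dd where dd: "\<forall>j\<in>{1..N}. dd j > 0 \<and> (\<forall>y\<ge>0. y < dd j \<longrightarrow> \<bar>g (spt j y) - g vtx\<bar> < e)"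
      by blast
    define d where "d = Min (dd ` {1..N})"
    have dpos: "d > 0" unfolding d_def using N dd by (subst Min_gr_iff) auto
    show ?thesis
    proof (intro exI[of _ d] conjI ballI impI dpos)
      fix q assume q: "q \<in> star N" "stardist q p < d"
      show "\<bar>g q - g p\<bar> < e"
        using star_cases[OF q(1)]
      proof
        assume "q = vtx" then show ?thesis using True e by simp
      next
        assume "\<exists>i x. 1 \<le> i \<and> i \<le> N \<and> x > 0 \<and> q = spt i x \<and> q = (i, x)"
        then obtain j y where jy: "1 \<le> j" "j \<le> N" "y > 0" "q = spt j y" "q = (j,y)" by blast
        have "stardist q p = y" using jy(1,3,5) True by (simp add: stardist_def vtx_def)
        moreover have "d \<le> dd j" unfolding d_def using jy(1,2) by (intro Min_le) auto
        ultimately have "y < dd j" using q(2) by simp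
        moreover have "j \<in> {1..N}" using jy by simp
        ultimately have "\<bar>g (spt j y) - g vtx\<bar> < e" using dd jy(3) by simp
        then show ?thesis using jy(4) True by simp
      qed
    qed
  next
    case False
    then obtain i x where ix: "1 \<le> i" "i \<le> N" "x > 0" "p = spt i x" "p = (i, x)" using star_cases[OF p] by blast
    obtain d1 where d1: "d1>0" "\<forall>y\<in>{0..}. dist y x < d1 \<longrightarrow> dist (edge g i y) (edge g i x) < e"
      using ci[of i x] ix by auto
    show ?thesis
    proof (intro exI[of _ "min d1 x"] conjI ballI impI)
      fix q assume q: "q \<in> star N" "stardist q p < min d1 x"
      show "\<bar>g q - g p\<bar> < e"
        using star_cases[OF q(1)]
      proof
        assume "q = vtx"
        then have "stardist q p = x" using ix(1,3,5) by (simp add: stardist_def vtx_def)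
        then show ?thesis using q(2) by simp
      next
        assume "\<exists>i x. 1 \<le> i \<and> i \<le> N \<and> x > 0 \<and> q = spt i x \<and> q = (i, x)"
        then obtain j y where jy: "1 \<le> j" "j \<le> N" "y > 0" "q = spt j y" "q = (j,y)" by blast
        have ji: "j = i"
        proof (rule ccontr)
          assume "j \<noteq> i"
          then have "stardist q p = y + x" using jy(5) ix(5) by (simp add: stardist_def)
          then show False using q(2) jy(3) by simp
        qed
        have "stardist q p = \<bar>y - x\<bar>" using jy(5) ix(5) ji by (simp add: stardist_def)
        then have "dist y x < d1" using q(2) by (simp add: dist_real_def)
        then have "dist (edge g i y) (edge g i x) < e" using d1(2) jy(3) by simp
        then show ?thesis using jy(4) ix(4) ji by (simp add: edge_def dist_real_def)
      qed
    qed (use d1 ix in auto)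
  qed
qed

lemma C0_bounded:
  assumes "g \<in> C0 N"
  shows "\<exists>B. \<forall>p\<in>star N. \<bar>g p\<bar> \<le> B"
proof -
  have "\<forall>i\<in>{1..N}. \<exists>B. \<forall>x\<ge>0. \<bar>edge g i x\<bar> \<le> B"
  proof
    fix i assume i: "i \<in> {1..N}"
    have c: "continuous_on {0..} (edge g i)" using edge_cont assms i by (auto simp: C0_def)
    have "(edge g i \<longlongrightarrow> 0) at_top" using assms i by (auto simp: C0_def)
    from tendstoD[OF this zero_less_one] have "eventually (\<lambda>x. \<bar>edge g i x\<bar> < 1) at_top"
      by (simp add: dist_real_def)
    then obtain M where M: "\<forall>x\<ge>M. \<bar>edge g i x\<bar> < 1" by (auto simp: eventually_at_top_linorder)
    have "compact (edge g i ` {0..max 0 M})"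
      by (intro compact_continuous_image continuous_on_subset[OF c]) auto
    then obtain B where B: "\<forall>y\<in>edge g i ` {0..max 0 M}. norm y \<le> B"
      using compact_imp_bounded bounded_iff by metis
    show "\<exists>B. \<forall>x\<ge>0. \<bar>edge g i x\<bar> \<le> B"
    proof (intro exI[of _ "max B 1"] allI impI)
      fix x :: real assume "x \<ge> 0"
      then show "\<bar>edge g i x\<bar> \<le> max B 1"
      proof (cases "x \<le> max 0 M")
        case True then show ?thesis using B \<open>x \<ge> 0\<close> by force
      next
        case False then have "\<bar>edge g i x\<bar> < 1" using M by auto
        then show ?thesis by linarith
      qed
    qed
  qed
  then obtain Bf where Bf: "\<forall>i\<in>{1..N}. \<forall>x\<ge>0. \<bar>edge g i x\<bar> \<le> Bf i" by metis
  show ?thesis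
  proof (intro exI[of _ "\<bar>g vtx\<bar> + (\<Sum>i\<in>{1..N}. \<bar>Bf i\<bar>)"] ballI)
    fix p assume p: "p \<in> star N"
    have s0: "0 \<le> (\<Sum>i\<in>{1..N}. \<bar>Bf i\<bar>)" by (simp add: sum_nonneg)
    show "\<bar>g p\<bar> \<le> \<bar>g vtx\<bar> + (\<Sum>i\<in>{1..N}. \<bar>Bf i\<bar>)"
      using star_cases[OF p]
    proof
      assume "p = vtx" then show ?thesis using s0 by simp
    next
      assume "\<exists>i x. 1 \<le> i \<and> i \<le> N \<and> x > 0 \<and> p = spt i x \<and> p = (i, x)"
      then obtain j y where jy: "1 \<le> j" "j \<le> N" "y > 0" "p = spt j y" by blast
      have "\<bar>g p\<bar> \<le> Bf j" using Bf jy by (auto simp: edge_def)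
      also have "\<dots> \<le> \<bar>Bf j\<bar>" by simp
      also have "\<dots> \<le> (\<Sum>i\<in>{1..N}. \<bar>Bf i\<bar>)" using jy by (intro member_le_sum) auto
      finally show ?thesis by simp
    qed
  qed
qed


lemma cont_Ici:
  assumes "continuous_on {0<..} (g::real\<Rightarrow>real)" "(g \<longlongrightarrow> g 0) (at_right 0)"
  shows "continuous_on {0..} g"
  unfolding continuous_on_eq_continuous_within
proof
  fix x :: real assume x: "x \<in> {0..}"
  show "continuous (at x within {0..}) g"
  proof (cases "x = 0")
    case True then show ?thesis using assms(2) by (simp add: continuous_within at_within_Ici_at_right)
  next
    case False
    then have "isCont g x" using assms(1) x continuous_on_eq_continuous_at[of "{0<..}" g] by auto
    then show ?thesis by (rule continuous_at_imp_continuous_within)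
  qed
qed

lemma EE_tendsto0: "(EE c0 c1 c2 \<longlongrightarrow> c0) (at_right 0)"
proof -
  have "isCont (EE c0 c1 c2) 0" by (rule DERIV_isCont[OF EE_deriv])
  then have "(EE c0 c1 c2 \<longlongrightarrow> EE c0 c1 c2 0) (at 0)" by (rule isContD)
  then show ?thesis by (simp add: EE_0 filterlim_at_split)
qed

lemma EE_tendsto0': "(EE c0 c1 c2 \<longlongrightarrow> EE c0 c1 c2 0) (at_right 0)"
  using EE_tendsto0 by (simp add: EE_0)

lemma bound_aux:
  fixes u v w z B C :: real
  assumes "\<bar>u\<bar> \<le> B" "\<bar>w\<bar> \<le> C"
  shows "\<bar>1/2 * u^2 * v + w * z\<bar> \<le> 1/2 * B^2 * \<bar>v\<bar> + C * \<bar>z\<bar>"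
proof -
  have 1: "u^2 \<le> B^2" using assms(1) by (metis abs_ge_zero power2_abs power_mono)
  then have 2: "u^2 * \<bar>v\<bar> \<le> B^2 * \<bar>v\<bar>" by (simp add: mult_right_mono)
  have 3: "\<bar>w\<bar> * \<bar>z\<bar> \<le> C * \<bar>z\<bar>" using assms(2) by (simp add: mult_right_mono)
  have "\<bar>1/2 * u^2 * v + w * z\<bar> \<le> \<bar>1/2 * u^2 * v\<bar> + \<bar>w * z\<bar>" by (rule abs_triangle_ineq)
  also have "\<dots> = 1/2 * (u^2 * \<bar>v\<bar>) + \<bar>w\<bar> * \<bar>z\<bar>" by (simp add: abs_mult)
  finally show ?thesis using 2 3 by linarith
qed

lemma construct:
  fixes N :: nat and \<sigma> b :: "nat \<times> real \<Rightarrow> real" and \<sigma>0 \<eta> :: real and \<rho> :: "nat \<Rightarrow> real"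
  assumes N: "1 \<le> N"
    and sPC: "\<sigma> \<in> PC N" and bPC: "b \<in> PC N"
    and "0 < \<sigma>0" and spos: "\<forall>p\<in>star N. \<sigma>0 < \<sigma> p"
    and rho1: "(\<Sum>i=1..N. \<rho> i) = 1"
  shows "\<exists>f. f \<in> DL N \<sigma> b \<eta> \<rho> \<and> Lop N \<sigma> b f vtx = 1 \<and> f \<in> borel_measurable borel"
proof -
  define s where "s i = Lim (at_right 0) (edge \<sigma> i)" for i
  define \<beta> where "\<beta> i = Lim (at_right 0) (edge b i)" for i
  define P where "P = \<eta> + 1"
  define Q where "Q i = (1 - \<beta> i * \<eta>) / (s i)^2 + \<eta> + 1/2" for i
  define f where "f p = EE 1 P (Q (fst p)) (snd p)" for p
  define D1 where "D1 i = EE (P - 1) (2 * Q i - P) (- Q i)" for i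
  define D2 where "D2 i = EE (2 * Q i - P - (P - 1)) (2 * (- Q i) - (2 * Q i - P)) (- (- Q i))" for i
  have s_lim: "(edge \<sigma> i \<longlongrightarrow> s i) (at_right 0)" if "i \<in> {1..N}" for i
  proof -
    have "\<exists>l. (edge \<sigma> i \<longlongrightarrow> l) (at_right 0)" using sPC that unfolding PC_def by simp
    then obtain l where l: "(edge \<sigma> i \<longlongrightarrow> l) (at_right 0)" by (elim exE)
    have "Lim (at_right 0) (edge \<sigma> i) = l" by (rule tendsto_Lim[OF trivial_limit_at_right_real l])
    then show ?thesis using l by (simp add: s_def)
  qed
  have b_lim: "(edge b i \<longlongrightarrow> \<beta> i) (at_right 0)" if "i \<in> {1..N}" for i
  proof -
    have "\<exists>l. (edge b i \<longlongrightarrow> l) (at_right 0)" using bPC that unfolding PC_def by simp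
    then obtain l where l: "(edge b i \<longlongrightarrow> l) (at_right 0)" by (elim exE)
    have "Lim (at_right 0) (edge b i) = l" by (rule tendsto_Lim[OF trivial_limit_at_right_real l])
    then show ?thesis using l by (simp add: \<beta>_def)
  qed
  have s_pos: "s i > 0" if i: "i \<in> {1..N}" for i
  proof -
    have "eventually (\<lambda>x. \<sigma>0 \<le> edge \<sigma> i x) (at_right 0)"
      using eventually_at_right_less[of 0] 
    proof (rule eventually_mono)
      fix x :: real assume "0 < x"
      then have "spt i x \<in> star N" using i spt_in_star by auto
      then show "\<sigma>0 \<le> edge \<sigma> i x" using spos by (auto simp: edge_def less_imp_le)
    qed
    then have "\<sigma>0 \<le> s i" by (intro tendsto_lowerbound[OF s_lim[OF i]]) auto
    then show ?thesis using \<open>0 < \<sigma>0\<close> by simp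
  qed
  have edge_f: "edge f i = EE 1 P (Q i)" if "i \<ge> 1" for i
    by (rule ext) (auto simp: edge_def f_def spt_def vtx_def EE_0)
  have dEf: "(edge f i has_real_derivative D1 i x) (at x within S)" if "i \<ge> 1" for i x S
    unfolding edge_f[OF that] D1_def by (rule EE_deriv)
  have d1f: "d1 f i x = D1 i x" if "i \<ge> 1" "x \<ge> 0" for i x
    unfolding d1_def using the_deriv[OF that(2) dEf[OF that(1)]] .
  have dD1: "(D1 i has_real_derivative D2 i x) (at x within S)" for i x S
    unfolding D1_def D2_def by (rule EE_deriv)
  have dd1f: "(d1 f i has_real_derivative D2 i x) (at x within {0..})" if "i \<ge> 1" "x \<ge> 0" for i x
    by (rule has_field_derivative_transform_within[OF dD1 zero_less_one]) (use that d1f in auto)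
  have d2f: "d2 f i x = D2 i x" if "i \<ge> 1" "x \<ge> 0" for i x
    unfolding d2_def using the_deriv[OF that(2) dd1f[OF that]] .
  have Ledge_eq: "Ledge \<sigma> b f i x = 1/2 * (edge \<sigma> i x)^2 * D2 i x + edge b i x * D1 i x"
    if "i \<ge> 1" "x \<ge> 0" for i x
    using that by (simp add: Ledge_def d1f d2f)
  have D1_0: "D1 i 0 = \<eta>" for i by (simp add: D1_def EE_0 P_def)
  have D2_0: "D2 i 0 = 2 * (1 - \<beta> i * \<eta>) / (s i)^2" for i by (simp add: D2_def EE_0 P_def Q_def)
  have Ledge_lim: "(Ledge \<sigma> b f i \<longlongrightarrow> 1) (at_right 0)" if i: "i \<in> {1..N}" for i
  proof -
    have "((\<lambda>x. 1/2 * (edge \<sigma> i x)^2 * D2 i x + edge b i x * D1 i x) \<longlongrightarrow>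
           1/2 * (s i)^2 * D2 i 0 + \<beta> i * D1 i 0) (at_right 0)"
      unfolding D1_def D2_def
      by (intro tendsto_intros s_lim b_lim i EE_tendsto0')
    moreover have "1/2 * (s i)^2 * D2 i 0 + \<beta> i * D1 i 0 = 1"
      using s_pos[OF i] by (simp add: D1_0 D2_0 field_simps)
    ultimately have "((\<lambda>x. 1/2 * (edge \<sigma> i x)^2 * D2 i x + edge b i x * D1 i x) \<longlongrightarrow> 1) (at_right 0)"
      by simp
    moreover have "eventually (\<lambda>x. 1/2 * (edge \<sigma> i x)^2 * D2 i x + edge b i x * D1 i x = Ledge \<sigma> b f i x) (at_right 0)"
      using eventually_at_right_less[of 0] by eventually_elim (use i Ledge_eq in auto)
    ultimately show ?thesis by (rule tendsto_cong[THEN iffD1, rotated])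
  qed
  have Lv: "Lop N \<sigma> b f vtx = 1"
  proof -
    have "Lop N \<sigma> b f vtx = (THE l. \<forall>i\<in>{1..N}. (Ledge \<sigma> b f i \<longlongrightarrow> l) (at_right 0))"
      by (simp add: Lop_def)
    also have "\<dots> = 1"
  proof (rule the_equality)
    show "\<forall>i\<in>{1..N}. (Ledge \<sigma> b f i \<longlongrightarrow> 1) (at_right 0)" using Ledge_lim by blast
    fix l assume "\<forall>i\<in>{1..N}. (Ledge \<sigma> b f i \<longlongrightarrow> l) (at_right 0)"
    moreover have "(1::nat) \<in> {1..N}" using N by simp
    ultimately have l1: "(Ledge \<sigma> b f 1 \<longlongrightarrow> l) (at_right 0)" by blast
    have L1: "(Ledge \<sigma> b f 1 \<longlongrightarrow> 1) (at_right 0)" using Ledge_lim N by simp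
    show "l = 1" by (rule tendsto_unique[OF _ l1 L1]) simp
  qed
    finally show ?thesis .
  qed
  have edge_L: "edge (Lop N \<sigma> b f) i x = (if x = 0 then 1 else Ledge \<sigma> b f i x)" if "i \<ge> 1" for i x
  proof (cases "x = 0")
    case True then show ?thesis by (simp add: edge_def spt_def Lv)
  next
    case False
    then have "spt i x = (i, x)" "(i, x) \<noteq> vtx" by (simp_all add: spt_def vtx_def)
    then show ?thesis using False by (simp add: edge_def Lop_def)
  qed
  have bnd: "\<exists>B. \<forall>x>0. \<bar>edge g i x\<bar> \<le> B" if "g \<in> PC N" "i \<in> {1..N}" for g i
  proof -
    have "bounded (edge g i ` {0<..})" using that by (auto simp: PC_def)
    then obtain B where "\<forall>y\<in>edge g i ` {0<..}. norm y \<le> B" by (auto simp: bounded_iff)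
    then show ?thesis by auto
  qed
  have EEc: "continuous_on S (EE c0 c1 c2)" for S c0 c1 c2 by (rule EE_cont)
  have Lcont: "continuous_on {0..} (edge (Lop N \<sigma> b f) i)" if i: "i \<in> {1..N}" for i
  proof (rule cont_Ici)
    have "continuous_on {0<..} (\<lambda>x. 1/2 * (edge \<sigma> i x)^2 * D2 i x + edge b i x * D1 i x)"
      using sPC bPC i unfolding PC_def D1_def D2_def by (intro continuous_intros EEc) auto
    then show "continuous_on {0<..} (edge (Lop N \<sigma> b f) i)"
      by (rule continuous_on_cong[THEN iffD1, rotated 2]) (use i edge_L Ledge_eq in auto)
    have "eventually (\<lambda>x. Ledge \<sigma> b f i x = edge (Lop N \<sigma> b f) i x) (at_right 0)"
      using eventually_at_right_less[of 0] by eventually_elim (use i edge_L in auto)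
    then show "(edge (Lop N \<sigma> b f) i \<longlongrightarrow> edge (Lop N \<sigma> b f) i 0) (at_right 0)"
      using Ledge_lim[OF i] i edge_L by (auto intro: tendsto_cong[THEN iffD1, rotated])
  qed
  have Ltop: "(edge (Lop N \<sigma> b f) i \<longlongrightarrow> 0) at_top" if i: "i \<in> {1..N}" for i
  proof -
    obtain B where B: "\<forall>x>0. \<bar>edge \<sigma> i x\<bar> \<le> B" using bnd[OF sPC i] by blast
    obtain C where C: "\<forall>x>0. \<bar>edge b i x\<bar> \<le> C" using bnd[OF bPC i] by blast
    have "((\<lambda>x. 1/2 * (edge \<sigma> i x)^2 * D2 i x + edge b i x * D1 i x) \<longlongrightarrow> 0) at_top"
    proof (rule Lim_null_comparison)
      show "eventually (\<lambda>x. norm (1/2 * (edge \<sigma> i x)^2 * D2 i x + edge b i x * D1 i x)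
              \<le> 1/2 * B^2 * \<bar>D2 i x\<bar> + C * \<bar>D1 i x\<bar>) at_top"
        using eventually_gt_at_top[of 0] by eventually_elim (use B C bound_aux in auto)
      have "((\<lambda>x. 1/2 * B^2 * \<bar>D2 i x\<bar> + C * \<bar>D1 i x\<bar>) \<longlongrightarrow> 1/2 * B^2 * 0 + C * 0) at_top"
        unfolding D1_def D2_def by (intro tendsto_intros tendsto_rabs_zero EE_lim)
      then show "((\<lambda>x. 1/2 * B^2 * \<bar>D2 i x\<bar> + C * \<bar>D1 i x\<bar>) \<longlongrightarrow> 0) at_top" by simp
    qed
    moreover have "eventually (\<lambda>x. 1/2 * (edge \<sigma> i x)^2 * D2 i x + edge b i x * D1 i x = edge (Lop N \<sigma> b f) i x) at_top"
      using eventually_gt_at_top[of 0] by eventually_elim (use i edge_L Ledge_eq in auto)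
    ultimately show ?thesis by (rule tendsto_cong[THEN iffD1, rotated])
  qed
  have fcont: "star_continuous N f"
    by (rule edge_cont_imp[OF N]) (auto simp: edge_f EE_cont)
  have fC0: "f \<in> C0 N" unfolding C0_def using fcont by (auto simp: edge_f EE_lim)
  have fC2: "f \<in> C2 N" unfolding C2_def using fcont
  proof (safe)
    fix i x :: "nat" and y :: real assume i: "i \<in> {1..N}"
    show "\<exists>D. (edge f i has_real_derivative D) (at y within {0..})" using dEf i by auto
    show "0 \<le> y \<Longrightarrow> \<exists>D. (d1 f i has_real_derivative D) (at y within {0..})" using dd1f i by auto
  next
    fix i assume i: "i \<in> {1..N}"
    have "continuous_on {0..} (D2 i)" unfolding D2_def by (rule EE_cont)
    then show "continuous_on {0..} (d2 f i)"
      by (rule continuous_on_cong[THEN iffD1, rotated 2]) (use i d2f in auto)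
  qed
  have LC0: "Lop N \<sigma> b f \<in> C0 N"
    unfolding C0_def using Ltop edge_cont_imp[OF N] Lcont by auto
  have LimL: "Lim (at_right 0) (Ledge \<sigma> b f i) = 1" if "i \<in> {1..N}" for i
    using Ledge_lim[OF that] by (intro tendsto_Lim) auto
  have eta: "\<eta> * Lop N \<sigma> b f vtx = (\<Sum>i=1..N. \<rho> i * d1 f i 0)"
  proof -
    have "(\<Sum>i=1..N. \<rho> i * d1 f i 0) = (\<Sum>i=1..N. \<rho> i * \<eta>)"
      by (intro sum.cong) (auto simp: d1f D1_0)
    also have "\<dots> = \<eta>" using rho1 by (simp add: sum_distrib_right[symmetric])
    finally show ?thesis using Lv by simp
  qed
  have "f \<in> DL N \<sigma> b \<eta> \<rho>"
    unfolding DL_def mem_Collect_eq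
  proof (intro conjI fC0 fC2 LC0 eta ballI)
    fix i j assume "i \<in> {1..N}" "j \<in> {1..N}"
    then show "Lim (at_right 0) (Ledge \<sigma> b f i) = Lim (at_right 0) (Ledge \<sigma> b f j)" using LimL by simp
  next
    fix i assume "i \<in> {1..N}"
    then show "\<exists>l. (Ledge \<sigma> b f i \<longlongrightarrow> l) (at_right 0)" using Ledge_lim by blast
  qed
  moreover have "f \<in> borel_measurable borel"
  proof (rule borel_measurable_continuous_onI)
    have "continuous_on UNIV (\<lambda>p::nat \<times> real. Q (fst p))"
      by (rule continuous_on_compose2[of UNIV Q]) (auto intro: continuous_intros)
    then show "continuous_on UNIV f" unfolding f_def[abs_def] EE_def
      by (intro continuous_intros)
  qed
  ultimately show ?thesis using Lv by blast
qed

lemma abs_aux: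
  fixes u v w t B1 B2 B3 :: real
  assumes "\<bar>u\<bar> \<le> B1" "\<bar>v\<bar> \<le> B2" "\<bar>w\<bar> \<le> B3" "t > 0"
  shows "\<bar>(u - v) / t - w\<bar> \<le> (B1 + B2) / t + B3"
proof -
  have a: "\<bar>u - v\<bar> \<le> B1 + B2" using assms(1,2) abs_triangle_ineq4[of u v] by linarith
  have b: "\<bar>(u - v) / t\<bar> = \<bar>u - v\<bar> / t" using assms(4) by simp
  have c: "\<bar>u - v\<bar> / t \<le> (B1 + B2) / t" using a assms(4) by (simp add: divide_right_mono)
  have "\<bar>(u - v) / t - w\<bar> \<le> \<bar>(u - v) / t\<bar> + \<bar>w\<bar>" by (rule abs_triangle_ineq4)
  then show ?thesis using b c assms(3) by linarith
qed

theorem proposition3p2: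
  fixes N :: nat and \<sigma> b :: "nat \<times> real \<Rightarrow> real" and \<sigma>0 \<eta> :: real and \<rho> :: "nat \<Rightarrow> real"
    and T :: "real \<Rightarrow> (nat \<times> real \<Rightarrow> real) \<Rightarrow> (nat \<times> real \<Rightarrow> real)"
    and P :: "nat \<times> real \<Rightarrow> 'w measure" and X :: "real \<Rightarrow> 'w \<Rightarrow> nat \<times> real"
  assumes "1 \<le> N"
    and "\<sigma> \<in> PC N" and "b \<in> PC N"
    and "0 < \<sigma>0" and "\<forall>p\<in>star N. \<sigma>0 < \<sigma> p"
    and "0 \<le> \<eta>"
    and "\<forall>i\<in>{1..N}. 0 < \<rho> i" and "(\<Sum>i=1..N. \<rho> i) = 1"
    and "generates N (Lop N \<sigma> b) (DL N \<sigma> b \<eta> \<rho>) T"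
    and "markov_process_of N T P X"
  shows "\<not> (\<forall>t>0. AE \<omega> in P vtx. ereal t < exit_vtx X \<omega>)"
proof
  assume H: "\<forall>t>0. AE \<omega> in P vtx. ereal t < exit_vtx X \<omega>"
  obtain f where f: "f \<in> DL N \<sigma> b \<eta> \<rho>" "Lop N \<sigma> b f vtx = 1" "f \<in> borel_measurable borel"
    using construct[OF assms(1-5) assms(8)] by blast
  note DLf = f(1)[unfolded DL_def mem_Collect_eq]
  have fC0: "f \<in> C0 N" using DLf by (rule conjunct2[THEN conjunct1])
  have LC0: "Lop N \<sigma> b f \<in> C0 N" using DLf by (rule conjunct2[THEN conjunct2, THEN conjunct1])
  note G = assms(9)[unfolded generates_def]
  have sg: "strongly_cont_semigroup N T" using G by (rule conjunct1)
  have gen0: "\<forall>f\<in>DL N \<sigma> b \<eta> \<rho>. ((\<lambda>t. supnorm N (\<lambda>p. (T t f p - f p) / t - Lop N \<sigma> b f p)) \<longlongrightarrow> 0) (at_right 0)"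
    using G by (rule conjunct2[THEN conjunct2, THEN conjunct2])
  have gen: "((\<lambda>t. supnorm N (\<lambda>p. (T t f p - f p) / t - Lop N \<sigma> b f p)) \<longlongrightarrow> 0) (at_right 0)"
    using gen0 f(1) by (rule bspec)
  note M = bspec[OF assms(10)[unfolded markov_process_of_def] vtx_in_star]
  have mp1: "prob_space (P vtx)" using M by (rule conjunct1)
  have mp2: "\<forall>t\<ge>0. X t \<in> measurable (P vtx) borel" using M by (rule conjunct2[THEN conjunct1])
  have mp3: "\<forall>t\<ge>0. \<forall>f\<in>C0 N. T t f vtx = (\<integral>\<omega>. f (X t \<omega>) \<partial>P vtx)"
    using M by (rule conjunct2[THEN conjunct2, THEN conjunct2, THEN conjunct2, THEN conjunct2, THEN conjunct1])
  have ge1: "1 \<le> supnorm N (\<lambda>p. (T t f p - f p) / t - Lop N \<sigma> b f p)" if t: "t > 0" for t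
  proof -
    have "AE \<omega> in P vtx. f (X t \<omega>) = f vtx"
      proof -
      have "AE \<omega> in P vtx. ereal t < exit_vtx X \<omega>" using H t by blast
      then show ?thesis
      proof (rule AE_mp, intro AE_I2 impI)
        fix \<omega> assume lt: "ereal t < exit_vtx X \<omega>"
        show "f (X t \<omega>) = f vtx"
        proof (rule ccontr)
          assume "f (X t \<omega>) \<noteq> f vtx"
          then have "X t \<omega> \<noteq> vtx" by auto
          then have "t \<in> {s. 0 < s \<and> X s \<omega> \<noteq> vtx}" using t by simp
          then have "exit_vtx X \<omega> \<le> ereal t" unfolding exit_vtx_def by (rule INF_lower)
          then show False using lt by simp
        qed
      qed
    qed
    have "(\<integral>\<omega>. f (X t \<omega>) \<partial>P vtx) = (\<integral>\<omega>. f vtx \<partial>P vtx)"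
    proof (rule integral_cong_AE)
      have "X t \<in> measurable (P vtx) borel" using mp2 t by simp
      then show "(\<lambda>\<omega>. f (X t \<omega>)) \<in> borel_measurable (P vtx)" using f(3) by (rule measurable_compose)
    qed (use \<open>AE \<omega> in P vtx. f (X t \<omega>) = f vtx\<close> in auto)
    also have "\<dots> = f vtx" using prob_space.prob_space[OF mp1] by simp
    finally have Tv: "T t f vtx = f vtx" using mp3 t fC0 by simp
    have TC0: "T t f \<in> C0 N" using sg fC0 t unfolding strongly_cont_semigroup_def by auto
    obtain B1 where B1: "\<forall>p\<in>star N. \<bar>T t f p\<bar> \<le> B1" using C0_bounded[OF TC0] by blast
    obtain B2 where B2: "\<forall>p\<in>star N. \<bar>f p\<bar> \<le> B2" using C0_bounded[OF fC0] by blast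
    obtain B3 where B3: "\<forall>p\<in>star N. \<bar>Lop N \<sigma> b f p\<bar> \<le> B3" using C0_bounded[OF LC0] by blast
    have bdd: "bdd_above ((\<lambda>p. \<bar>(T t f p - f p) / t - Lop N \<sigma> b f p\<bar>) ` star N)"
      using B1 B2 B3 t by (intro bdd_aboveI2[where M="(B1 + B2) / t + B3"] abs_aux) auto
    have "1 = \<bar>(T t f vtx - f vtx) / t - Lop N \<sigma> b f vtx\<bar>" using Tv f(2) by simp
    also have "\<dots> \<le> supnorm N (\<lambda>p. (T t f p - f p) / t - Lop N \<sigma> b f p)"
      unfolding supnorm_def by (rule cSUP_upper[OF vtx_in_star bdd])
    finally show ?thesis .
  qed
  have "eventually (\<lambda>t. supnorm N (\<lambda>p. (T t f p - f p) / t - Lop N \<sigma> b f p) < 1) (at_right 0)"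
    using order_tendstoD(2)[OF gen] by simp
  moreover have "eventually (\<lambda>t. (0::real) < t) (at_right 0)" by (rule eventually_at_right_less)
  ultimately have "eventually (\<lambda>t::real. False) (at_right 0)"
  proof eventually_elim
    fix t :: real assume "supnorm N (\<lambda>p. (T t f p - f p) / t - Lop N \<sigma> b f p) < 1" "0 < t"
    then show False using ge1[of t] by linarith
  qed
  then show False by simp
qed

end
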